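(* The group $\overline{\phi}(\mathcal{B})\cap\mathrm{PGL}(2,\mathbb{Z}[t,t^{-1}])$ contains $U^1$.
   Context: For a Laurent polynomial or matrix in $t$, the bar denotes substitution $t\mapsto t^{-1}$; $\Phi=1+t^{-1}+t$. Let $J_3=\begin{pmatrix}1&-t^{-1}&-t^{-1}\\-t&1&-t^{-1}\\-t&-t&1\end{pmatrix}$, $v=(t,t^2,t^3)$ (a row vector), $\vec{1}=(1,1,1)^T$, and $\mathcal{B}=\{A\in\mathrm{GL}(3,\mathbb{Z}[t,t^{-1}]) : vA=v,\ A\vec 1=\vec 1,\ \overline{A}J_3A^T=J_3\}$. For $A=(A_{ij})\in\mathcal{B}$ put, for $k=1,2$, $f_{k1}=A_{k1}(1+t+t^2)-1$, $f_{k2}=A_{k1}+A_{k2}(1+t)-1$, $g_{kl}=f_{kl}/(t(1+t))$, $\phi(A)=\begin{pmatrix}g_{11}&g_{12}\\ t^{-1}g_{11}+(1+t)g_{21}& t^{-1}g_{12}+(1+t)g_{22}\end{pmatrix}$, and $\overline{\phi}(A)$ its class in $\mathrm{PGL}(2,\mathbb{Q}(t))$. All projective groups are viewed inside $\mathrm{PGL}(2,\mathbb{Q}(t))$. The quaternionic group $\mathcal{Q}$ is the set of elements of $\mathrm{PGL}(2,\mathbb{Q}[t,t^{-1}])$ having a representative of the form $\begin{pmatrix}g_1&g_2\\-\Phi\overline{g_2}&\overline{g_1}\end{pmatrix}$ with $g_1,g_2\in\mathbb{Q}[t,t^{-1}]$; $U=\mathcal{Q}\cap\mathrm{PGL}(2,\mathbb{Z}[t,t^{-1}])$,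 and $U^1$ is the subgroup of elements of $U$ having a representative $B$ with $\det B=1$. *)

theory Defs
  imports "HOL-Analysis.Analysis" "HOL-Computational_Algebra.Formal_Laurent_Series"
begin

text \<open>Ambient field: formal Laurent series over the rationals in the variable t = fls_X.\<close>

type_synonym K = "rat fls"

definition laurentQ :: "K set" where
  "laurentQ = {f. finite {n. fls_nth f n \<noteq> 0}}"

definition laurentZ :: "K set" where
  "laurentZ = {f. f \<in> laurentQ \<and> (\<forall>n. fls_nth f n \<in> \<int>)}"

definition ratfun :: "K set" where
  "ratfun = {f. \<exists>p q. p \<in> laurentQ \<and> q \<in> laurentQ \<and> q \<noteq> 0 \<and> f = p / q}"

definition lbar :: "K \<Rightarrow> K" where
  "lbar f = Abs_fls (\<lambda>n. fls_nth f (- n))"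

definition Phi :: K where
  "Phi = 1 + fls_X_inv + fls_X"

definition matbar :: "K^'n^'m \<Rightarrow> K^'n^'m" where
  "matbar A = (\<chi> i j. lbar (A $ i $ j))"

definition GLm :: "K set \<Rightarrow> (K^'n^'n) set" where
  "GLm R = {A. (\<forall>i j. A $ i $ j \<in> R) \<and>
     (\<exists>B. (\<forall>i j. B $ i $ j \<in> R) \<and> A ** B = mat 1 \<and> B ** A = mat 1)}"

definition J3 :: "K^3^3" where
  "J3 = vector [vector [1, - fls_X_inv, - fls_X_inv],
                vector [- fls_X, 1, - fls_X_inv],
                vector [- fls_X, - fls_X, 1]]"

definition vrow :: "K^3" where
  "vrow = vector [fls_X, fls_X ^ 2, fls_X ^ 3]"

definition one3 :: "K^3" where
  "one3 = vector [1, 1, 1]"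

definition calB :: "(K^3^3) set" where
  "calB = {A. A \<in> GLm laurentZ \<and> vrow v* A = vrow \<and> A *v one3 = one3
             \<and> matbar A ** J3 ** transpose A = J3}"

text \<open>The map phi; indices 1,2 of type 3 are the first two rows/columns.\<close>
definition phi :: "K^3^3 \<Rightarrow> K^2^2" where
  "phi A = (let t = fls_X :: K;
     f11 = A$1$1 * (1 + t + t^2) - 1;
     f12 = A$1$1 + A$1$2 * (1 + t) - 1;
     f21 = A$2$1 * (1 + t + t^2) - 1;
     f22 = A$2$1 + A$2$2 * (1 + t) - 1;
     g11 = f11 / (t * (1 + t)); g12 = f12 / (t * (1 + t));
     g21 = f21 / (t * (1 + t)); g22 = f22 / (t * (1 + t))
   in vector [vector [g11, g12],
              vector [fls_X_inv * g11 + (1 + t) * g21, fls_X_inv * g12 + (1 + t) * g22]])"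

text \<open>Projective classes: an element of PGL(2, -) is the set of all nonzero scalar
  multiples of a representative.\<close>
definition pclass :: "K^2^2 \<Rightarrow> (K^2^2) set" where
  "pclass M = {N. \<exists>c. c \<noteq> 0 \<and> N = (\<chi> i j. c * M $ i $ j)}"

definition PGL2 :: "K set \<Rightarrow> (K^2^2) set set" where
  "PGL2 R = pclass ` GLm R"

definition quatQ :: "(K^2^2) set set" where
  "quatQ = {x \<in> PGL2 laurentQ. \<exists>g1 g2. g1 \<in> laurentQ \<and> g2 \<in> laurentQ \<and>
     x = pclass (vector [vector [g1, g2], vector [- Phi * lbar g2, lbar g1]])}"

definition UZ :: "(K^2^2) set set" where
  "UZ = quatQ \<inter> PGL2 laurentZ"

definition U1 :: "(K^2^2) set set" where
  "U1 = {x \<in> UZ. \<exists>B. B \<in> GLm ratfun \<and> x = pclass B \<and> det B = 1}"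

definition phibar :: "K^3^3 \<Rightarrow> (K^2^2) set" where
  "phibar A = pclass (phi A)"

end

theory Submission
  imports Defs
begin

no_notation fps_nth (infixl \<open>$\<close> 75)
notation fls_nth (infixl \<open>$$\<close> 75)

definition lmono :: "rat \<Rightarrow> int \<Rightarrow> K" where
  "lmono c n = fls_shift (-n) (fls_const c)"

lemma lmono_nth [simp]: "lmono c n $$ m = (if m = n then c else 0)"
  by (simp add: lmono_def)

lemma lmono_mult_nth: "(lmono c n * q) $$ m = c * q $$ (m - n)"
  by (simp add: lmono_def fls_shifted_times_simps)

lemma laurentQ_iff: "f \<in> laurentQ \<longleftrightarrow> finite {n. f $$ n \<noteq> 0}"
  by (simp add: laurentQ_def)

lemma laurentZ_iff: "f \<in> laurentZ \<longleftrightarrow> finite {n. f $$ n \<noteq> 0} \<and> (\<forall>n. f $$ n \<in> \<int>)"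
  by (simp add: laurentZ_def laurentQ_def)

lemma laurent_induct_gen:
  assumes fin: "finite {n. f $$ n \<noteq> 0}" and R: "\<forall>n. f $$ n \<in> R" and R0: "0 \<in> R"
  and P0: "P 0"
  and step: "\<And>c n g. c \<in> R \<Longrightarrow> finite {n. g $$ n \<noteq> 0} \<Longrightarrow> (\<forall>n. g $$ n \<in> R) \<Longrightarrow> P g \<Longrightarrow> P (lmono c n + g)"
  shows "P f"
proof -
  have "\<forall>f. card {n. f $$ n \<noteq> 0} = k \<longrightarrow> finite {n. f $$ n \<noteq> 0} \<longrightarrow> (\<forall>n. f $$ n \<in> R) \<longrightarrow> P f" for k
  proof (induction k)
    case 0
    then show ?case
    proof (intro allI impI)
      fix f :: K assume "card {n. f $$ n \<noteq> 0} = 0" "finite {n. f $$ n \<noteq> 0}"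
      then have "f = 0" by (auto intro!: fls_eqI)
      then show "P f" using P0 by simp
    qed
  next
    case (Suc k)
    show ?case
    proof (intro allI impI)
      fix f :: K assume c: "card {n. f $$ n \<noteq> 0} = Suc k" and fi: "finite {n. f $$ n \<noteq> 0}"
        and fR: "\<forall>n. f $$ n \<in> R"
      have "{n. f $$ n \<noteq> 0} \<noteq> {}" using c by (metis card.empty nat.distinct(1))
      then obtain n where n: "f $$ n \<noteq> 0" by blast
      define g where "g = f - lmono (f $$ n) n"
      have sg: "{m. g $$ m \<noteq> 0} = {m. f $$ m \<noteq> 0} - {n}"
        by (auto simp: g_def)
      have fg: "finite {m. g $$ m \<noteq> 0}" using fi sg by simp
      have cg: "card {m. g $$ m \<noteq> 0} = k" using c sg n fi by simp
      have gR: "\<forall>m. g $$ m \<in> R" using fR R0 by (auto simp: g_def)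
      have "P g" using Suc.IH cg fg gR by blast
      then have "P (lmono (f $$ n) n + g)" using step fR fg gR by blast
      then show "P f" by (simp add: g_def)
    qed
  qed
  then show ?thesis using fin R by blast
qed

lemma laurentQ_induct [consumes 1, case_names zero step]:
  assumes "f \<in> laurentQ" "P 0"
  and "\<And>c n g. g \<in> laurentQ \<Longrightarrow> P g \<Longrightarrow> P (lmono c n + g)"
  shows "P f"
proof (rule laurent_induct_gen[of f UNIV P])
  show "finite {n. f $$ n \<noteq> 0}" using assms(1) by (simp add: laurentQ_iff)
  show "\<And>c n g. c \<in> UNIV \<Longrightarrow> finite {n. g $$ n \<noteq> 0} \<Longrightarrow> \<forall>n. g $$ n \<in> UNIV \<Longrightarrow> P g \<Longrightarrow> P (lmono c n + g)"
    using assms(3) by (simp add: laurentQ_iff)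
qed (use assms(2) in auto)

lemma laurentZ_induct [consumes 1, case_names zero step]:
  assumes "f \<in> laurentZ" "P 0"
  and "\<And>c n g. c \<in> \<int> \<Longrightarrow> g \<in> laurentZ \<Longrightarrow> P g \<Longrightarrow> P (lmono c n + g)"
  shows "P f"
proof (rule laurent_induct_gen[of f \<int> P])
  show "finite {n. f $$ n \<noteq> 0}" "\<forall>n. f $$ n \<in> \<int>" using assms(1) by (simp_all add: laurentZ_iff)
  show "\<And>c n g. c \<in> \<int> \<Longrightarrow> finite {n. g $$ n \<noteq> 0} \<Longrightarrow> \<forall>n. g $$ n \<in> \<int> \<Longrightarrow> P g \<Longrightarrow> P (lmono c n + g)"
    using assms(3) by (simp add: laurentZ_iff)
qed (use assms(2) in auto)

lemma laurentZ_Q: "f \<in> laurentZ \<Longrightarrow> f \<in> laurentQ"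
  by (simp add: laurentZ_def)

lemma laurentQ_0 [simp]: "0 \<in> laurentQ" and laurentZ_0 [simp]: "0 \<in> laurentZ"
  by (auto simp: laurentZ_iff laurentQ_iff)

lemma laurentQ_mono [simp]: "lmono c n \<in> laurentQ"
proof -
  have "{m. lmono c n $$ m \<noteq> 0} \<subseteq> {n}" by auto
  then show ?thesis unfolding laurentQ_iff by (rule finite_subset) simp
qed

lemma laurentZ_mono [simp]: "c \<in> \<int> \<Longrightarrow> lmono c n \<in> laurentZ"
  using laurentQ_mono[of c n] by (auto simp: laurentZ_iff laurentQ_iff)

lemma supp_add: "{n. (f + g) $$ n \<noteq> 0} \<subseteq> {n. f $$ n \<noteq> 0} \<union> {n. g $$ n \<noteq> (0::rat)}"
  by auto

lemma laurentQ_add [simp]: "f \<in> laurentQ \<Longrightarrow> g \<in> laurentQ \<Longrightarrow> f + g \<in> laurentQ"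
  unfolding laurentQ_iff by (rule finite_subset[OF supp_add]) simp

lemma laurentQ_uminus [simp]: "f \<in> laurentQ \<Longrightarrow> - f \<in> laurentQ"
  unfolding laurentQ_iff by simp

lemma laurentQ_diff [simp]: "f \<in> laurentQ \<Longrightarrow> g \<in> laurentQ \<Longrightarrow> f - g \<in> laurentQ"
  using laurentQ_add[of f "-g"] by simp

lemma laurentZ_add [simp]: "f \<in> laurentZ \<Longrightarrow> g \<in> laurentZ \<Longrightarrow> f + g \<in> laurentZ"
  using laurentQ_add[of f g] by (auto simp: laurentZ_def)

lemma laurentZ_uminus [simp]: "f \<in> laurentZ \<Longrightarrow> - f \<in> laurentZ"
  using laurentQ_uminus[of f] by (auto simp: laurentZ_def)

lemma laurentZ_diff [simp]: "f \<in> laurentZ \<Longrightarrow> g \<in> laurentZ \<Longrightarrow> f - g \<in> laurentZ"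
  using laurentZ_add[of f "-g"] by simp

lemma laurentQ_mono_mult: "g \<in> laurentQ \<Longrightarrow> lmono c n * g \<in> laurentQ"
proof -
  assume g: "g \<in> laurentQ"
  have sub: "{m. (lmono c n * g) $$ m \<noteq> 0} \<subseteq> (\<lambda>k. k + n) ` {m. g $$ m \<noteq> 0}"
  proof
    fix m assume "m \<in> {m. (lmono c n * g) $$ m \<noteq> 0}"
    then have "g $$ (m - n) \<noteq> 0" by (simp add: lmono_mult_nth)
    then show "m \<in> (\<lambda>k. k + n) ` {m. g $$ m \<noteq> 0}" by (intro image_eqI[of _ _ "m - n"]) auto
  qed
  have "finite ((\<lambda>k. k + n) ` {m. g $$ m \<noteq> 0})" using g by (simp add: laurentQ_iff)
  then show ?thesis unfolding laurentQ_iff by (rule finite_subset[OF sub])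
qed

lemma laurentZ_mono_mult: "c \<in> \<int> \<Longrightarrow> g \<in> laurentZ \<Longrightarrow> lmono c n * g \<in> laurentZ"
  using laurentQ_mono_mult[of g c n] by (auto simp: laurentZ_def lmono_mult_nth)

lemma laurentQ_mult [simp]: "f \<in> laurentQ \<Longrightarrow> g \<in> laurentQ \<Longrightarrow> f * g \<in> laurentQ"
proof (induction f rule: laurentQ_induct)
  case zero then show ?case by simp
next
  case (step c n h) then show ?case by (simp add: distrib_right laurentQ_mono_mult)
qed

lemma laurentZ_mult [simp]: "f \<in> laurentZ \<Longrightarrow> g \<in> laurentZ \<Longrightarrow> f * g \<in> laurentZ"
proof (induction f rule: laurentZ_induct)
  case zero then show ?case by simp
next
  case (step c n h) then show ?case by (simp add: distrib_right laurentZ_mono_mult)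
qed

lemma lmono_1_0: "lmono 1 0 = 1" by (rule fls_eqI) simp
lemma lmono_X: "fls_X = lmono 1 1" by (rule fls_eqI) simp
lemma lmono_X_inv: "fls_X_inv = lmono 1 (-1)" by (rule fls_eqI) simp
lemma lmono_const: "fls_const c = lmono c 0" by (rule fls_eqI) simp

lemma laurentZ_1 [simp]: "1 \<in> laurentZ" using laurentZ_mono[of 1 0] by (simp add: lmono_1_0)
lemma laurentZ_X [simp]: "fls_X \<in> laurentZ" by (simp add: lmono_X)
lemma laurentZ_X_inv [simp]: "fls_X_inv \<in> laurentZ" by (simp add: lmono_X_inv)
lemma laurentQ_1 [simp]: "1 \<in> laurentQ" by (simp add: laurentZ_Q)
lemma laurentQ_X [simp]: "fls_X \<in> laurentQ" by (simp add: laurentZ_Q)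
lemma laurentQ_X_inv [simp]: "fls_X_inv \<in> laurentQ" by (simp add: laurentZ_Q)

lemma laurentZ_power [simp]: "f \<in> laurentZ \<Longrightarrow> f ^ n \<in> laurentZ"
  by (induction n) auto
lemma laurentQ_power [simp]: "f \<in> laurentQ \<Longrightarrow> f ^ n \<in> laurentQ"
  by (induction n) auto
lemma laurentZ_numeral [simp]: "numeral k \<in> laurentZ"
proof -
  have "(numeral k :: K) = fls_const (numeral k)" by (metis fls_of_nat of_nat_numeral)
  also have "\<dots> = lmono (numeral k) 0" by (simp add: lmono_const)
  finally show ?thesis by (metis laurentZ_mono Ints_numeral)
qed

lemma lmono_mult_mono: "lmono c n * lmono d m = lmono (c*d) (n+m)"
  by (rule fls_eqI) (simp add: lmono_mult_nth)
lemma lmono_add: "lmono c n + lmono d n = lmono (c+d) n"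
  by (rule fls_eqI) simp
lemma lmono_uminus: "- lmono c n = lmono (-c) n"
  by (rule fls_eqI) simp
lemma lmono_0 [simp]: "lmono 0 n = 0"
  by (rule fls_eqI) simp

lemma lmono_eq_iff: "lmono c n = lmono d n \<longleftrightarrow> c = d"
  by (metis lmono_nth)

lemma lbar_nth: "f \<in> laurentQ \<Longrightarrow> lbar f $$ n = f $$ (-n)"
proof -
  assume f: "f \<in> laurentQ"
  have eq: "{x::nat. \<not> (f $$ (- (- int x)) = 0)} = int -` {n. f $$ n \<noteq> 0}" by auto
  have fin: "finite {x::nat. \<not> (f $$ (- (- int x)) = 0)}"
    unfolding eq using f by (intro finite_vimageI) (auto simp: laurentQ_iff)
  show ?thesis unfolding lbar_def
    by (rule nth_Abs_fls_finite_nonzero_neg_nth[where f="\<lambda>n. f $$ (-n)"]) (use fin in simp)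
qed

lemma laurentQ_lbar [simp]: "f \<in> laurentQ \<Longrightarrow> lbar f \<in> laurentQ"
proof -
  assume f: "f \<in> laurentQ"
  have "{n. lbar f $$ n \<noteq> 0} = uminus -` {n. f $$ n \<noteq> 0}"
    using f by (auto simp: lbar_nth)
  moreover have "finite (uminus -` {n. f $$ n \<noteq> 0})"
    by (rule finite_vimageI) (use f in \<open>auto simp: laurentQ_iff inj_on_def\<close>)
  ultimately show ?thesis by (simp only: laurentQ_iff)
qed

lemma laurentZ_lbar [simp]: "f \<in> laurentZ \<Longrightarrow> lbar f \<in> laurentZ"
  using laurentQ_lbar[of f] by (auto simp: laurentZ_def lbar_nth)

lemma lbar_add: "f \<in> laurentQ \<Longrightarrow> g \<in> laurentQ \<Longrightarrow> lbar (f + g) = lbar f + lbar g"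
  by (rule fls_eqI) (simp add: lbar_nth)
lemma lbar_uminus: "f \<in> laurentQ \<Longrightarrow> lbar (- f) = - lbar f"
  by (rule fls_eqI) (simp add: lbar_nth)
lemma lbar_diff: "f \<in> laurentQ \<Longrightarrow> g \<in> laurentQ \<Longrightarrow> lbar (f - g) = lbar f - lbar g"
  by (rule fls_eqI) (simp add: lbar_nth)
lemma lbar_lmono: "lbar (lmono c n) = lmono c (-n)"
  by (rule fls_eqI) (auto simp: lbar_nth)
lemma lbar_lmono_mult: "g \<in> laurentQ \<Longrightarrow> lbar (lmono c n * g) = lmono c (-n) * lbar g"
proof (rule fls_eqI)
  fix m assume g: "g \<in> laurentQ"
  have "-m - n = -(m - -n)" by simp
  then show "lbar (lmono c n * g) $$ m = (lmono c (-n) * lbar g) $$ m"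
    using g by (simp only: lbar_nth laurentQ_mono_mult lmono_mult_nth)
qed
lemma lbar_0 [simp]: "lbar 0 = 0"
  by (rule fls_eqI) (simp add: lbar_nth)

lemma lbar_mult: "f \<in> laurentQ \<Longrightarrow> g \<in> laurentQ \<Longrightarrow> lbar (f * g) = lbar f * lbar g"
proof (induction f rule: laurentQ_induct)
  case zero then show ?case by simp
next
  case (step c n h)
  have "lbar ((lmono c n + h) * g) = lbar (lmono c n * g + h * g)" by (simp add: distrib_right)
  also have "\<dots> = lmono c (-n) * lbar g + lbar h * lbar g"
    using step by (simp add: lbar_add laurentQ_mono_mult lbar_lmono_mult)
  also have "\<dots> = lbar (lmono c n + h) * lbar g"
    using step by (simp add: lbar_add lbar_lmono distrib_right)
  finally show ?case .
qed

lemma lbar_lbar [simp]: "f \<in> laurentQ \<Longrightarrow> lbar (lbar f) = f"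
  by (rule fls_eqI) (simp add: lbar_nth)

lemma lbar_inj: "f \<in> laurentQ \<Longrightarrow> g \<in> laurentQ \<Longrightarrow> lbar f = lbar g \<Longrightarrow> f = g"
  by (metis lbar_lbar)

lemma lbar_eq0_iff: "f \<in> laurentQ \<Longrightarrow> lbar f = 0 \<longleftrightarrow> f = 0"
  by (metis lbar_0 lbar_lbar laurentQ_0)

lemma lbar_1 [simp]: "lbar 1 = 1" by (metis lbar_lmono lmono_1_0 minus_zero)
lemma lbar_X [simp]: "lbar fls_X = fls_X_inv" by (simp add: lmono_X lmono_X_inv lbar_lmono)
lemma lbar_X_inv [simp]: "lbar fls_X_inv = fls_X" by (simp add: lmono_X lmono_X_inv lbar_lmono)
lemma lbar_power: "f \<in> laurentQ \<Longrightarrow> lbar (f ^ n) = lbar f ^ n"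
  by (induction n) (simp_all add: lbar_mult)
lemma lbar_numeral [simp]: "lbar (numeral k) = numeral k"
proof -
  have "(numeral k :: K) = lmono (numeral k) 0" by (metis fls_of_nat of_nat_numeral lmono_const)
  then show ?thesis by (metis lbar_lmono minus_zero)
qed

definition ev :: "'b::field_char_0 \<Rightarrow> K \<Rightarrow> 'b" where
  "ev z f = (\<Sum>n\<in>{n. f $$ n \<noteq> 0}. of_rat (f $$ n) * z powi n)"

lemma ev_superset: "finite F \<Longrightarrow> {n. f $$ n \<noteq> 0} \<subseteq> F \<Longrightarrow> ev z f = (\<Sum>n\<in>F. of_rat (f $$ n) * z powi n)"
  unfolding ev_def by (rule sum.mono_neutral_left) auto

lemma ev_add: "f \<in> laurentQ \<Longrightarrow> g \<in> laurentQ \<Longrightarrow> ev z (f + g) = ev z f + ev z g"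
proof -
  assume f: "f \<in> laurentQ" and g: "g \<in> laurentQ"
  define F where "F = {n. f $$ n \<noteq> 0} \<union> {n. g $$ n \<noteq> 0}"
  have fin: "finite F" using f g by (simp add: F_def laurentQ_iff)
  have "ev z (f + g) = (\<Sum>n\<in>F. of_rat ((f+g) $$ n) * z powi n)"
    by (rule ev_superset[OF fin]) (auto simp: F_def)
  also have "\<dots> = (\<Sum>n\<in>F. of_rat (f $$ n) * z powi n) + (\<Sum>n\<in>F. of_rat (g $$ n) * z powi n)"
    by (simp add: of_rat_add distrib_right sum.distrib)
  also have "\<dots> = ev z f + ev z g"
    by (subst (1 2) ev_superset[OF fin]) (auto simp: F_def)
  finally show ?thesis .
qed

lemma ev_uminus: "ev z (- f) = - ev z f"
  unfolding ev_def by (simp add: of_rat_minus sum_negf)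

lemma ev_diff: "f \<in> laurentQ \<Longrightarrow> g \<in> laurentQ \<Longrightarrow> ev z (f - g) = ev z f - ev z g"
  using ev_add[of f "-g" z] by (simp add: ev_uminus)

lemma ev_0 [simp]: "ev z 0 = 0" by (simp add: ev_def)

lemma ev_lmono: "ev z (lmono c n) = of_rat c * z powi n"
  by (subst ev_superset[of "{n}"]) auto

lemma ev_lmono_mult:
  assumes z: "z \<noteq> 0" and g: "g \<in> laurentQ"
  shows "ev z (lmono c n * g) = of_rat c * z powi n * ev z g"
proof -
  define G where "G = {m. g $$ m \<noteq> 0}"
  have finG: "finite G" using g by (simp add: G_def laurentQ_iff)
  have "ev z (lmono c n * g) = (\<Sum>m\<in>(\<lambda>k. k + n) ` G. of_rat ((lmono c n * g) $$ m) * z powi m)"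
  proof (rule ev_superset)
    show "finite ((\<lambda>k. k + n) ` G)" using finG by simp
    show "{m. (lmono c n * g) $$ m \<noteq> 0} \<subseteq> (\<lambda>k. k + n) ` G"
    proof
      fix m assume "m \<in> {m. (lmono c n * g) $$ m \<noteq> 0}"
      then have "g $$ (m - n) \<noteq> 0" by (simp add: lmono_mult_nth)
      then show "m \<in> (\<lambda>k. k + n) ` G" by (intro image_eqI[of _ _ "m - n"]) (auto simp: G_def)
    qed
  qed
  also have "\<dots> = (\<Sum>k\<in>G. of_rat ((lmono c n * g) $$ (k + n)) * z powi (k + n))"
    by (subst sum.reindex) (auto simp: inj_on_def)
  also have "\<dots> = (\<Sum>k\<in>G. of_rat c * z powi n * (of_rat (g $$ k) * z powi k))"
    by (intro sum.cong refl) (simp only: lmono_mult_nth add_diff_cancel, simp add: of_rat_mult power_int_add z mult_ac)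
  also have "\<dots> = of_rat c * z powi n * ev z g"
    by (simp add: sum_distrib_left ev_def G_def)
  finally show ?thesis .
qed

lemma ev_mult_aux: "f \<in> laurentQ \<Longrightarrow> z \<noteq> 0 \<Longrightarrow> g \<in> laurentQ \<Longrightarrow> ev z (f * g) = ev z f * ev z g"
proof (induction f rule: laurentQ_induct)
  case zero then show ?case by simp
next
  case (step c n h)
  have "ev z ((lmono c n + h) * g) = ev z (lmono c n * g + h * g)" by (simp add: distrib_right)
  also have "\<dots> = of_rat c * z powi n * ev z g + ev z h * ev z g"
    using step by (simp add: ev_add laurentQ_mono_mult ev_lmono_mult)
  also have "\<dots> = ev z (lmono c n + h) * ev z g"
    using step by (simp add: ev_add ev_lmono distrib_right)
  finally show ?case .
qed

lemma ev_mult: "z \<noteq> 0 \<Longrightarrow> f \<in> laurentQ \<Longrightarrow> g \<in> laurentQ \<Longrightarrow> ev z (f * g) = ev z f * ev z g"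
  using ev_mult_aux by blast

lemma ev_1 [simp]: "ev z 1 = 1" by (metis ev_lmono lmono_1_0 of_rat_1 mult_1 power_int_0_right)
lemma ev_X [simp]: "ev z fls_X = z" by (simp add: lmono_X ev_lmono)
lemma ev_X_inv [simp]: "ev z fls_X_inv = inverse z" by (simp add: lmono_X_inv ev_lmono power_int_minus)
lemma ev_numeral [simp]: "ev z (numeral k) = numeral k"
proof -
  have "(numeral k :: K) = lmono (numeral k) 0" by (metis fls_of_nat of_nat_numeral lmono_const)
  then show ?thesis using ev_lmono[of z "numeral k" 0] by simp
qed
lemma ev_power: "z \<noteq> 0 \<Longrightarrow> f \<in> laurentQ \<Longrightarrow> ev z (f ^ n) = ev z f ^ n"
  by (induction n) (simp_all add: ev_mult)

lemma ev_lbar: "f \<in> laurentQ \<Longrightarrow> ev z (lbar f) = ev (inverse z) f"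
proof -
  assume f: "f \<in> laurentQ"
  define G where "G = {m. f $$ m \<noteq> 0}"
  have finG: "finite G" using f by (simp add: G_def laurentQ_iff)
  have "ev z (lbar f) = (\<Sum>m\<in>uminus ` G. of_rat (lbar f $$ m) * z powi m)"
  proof (rule ev_superset)
    show "finite (uminus ` G)" using finG by simp
    show "{n. lbar f $$ n \<noteq> 0} \<subseteq> uminus ` G"
    proof
      fix m assume "m \<in> {n. lbar f $$ n \<noteq> 0}"
      then have "f $$ (-m) \<noteq> 0" using f by (simp add: lbar_nth)
      then show "m \<in> uminus ` G" by (intro image_eqI[of _ _ "-m"]) (auto simp: G_def)
    qed
  qed
  also have "\<dots> = (\<Sum>k\<in>G. of_rat (f $$ k) * (inverse z) powi k)"
    by (subst sum.reindex) (auto simp: inj_on_def lbar_nth f power_int_minus power_int_inverse)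
  also have "\<dots> = ev (inverse z) f" by (simp add: ev_def G_def)
  finally show ?thesis .
qed

lemma div_main:
  fixes z :: "'b::field_char_0" and d :: K and k :: int
  assumes dZ: "d \<in> laurentZ" and d0: "d $$ 0 = 1" and dlo: "\<forall>m<0. d $$ m = 0" and dhi: "\<forall>m>k. d $$ m = 0"
  and k1: "k \<ge> 1"
  and z0: "z \<noteq> 0" and dz: "ev z d = 0"
  and short: "\<forall>p n. p \<in> laurentZ \<longrightarrow> (\<forall>m. m < n \<or> m \<ge> n + k \<longrightarrow> p $$ m = 0) \<longrightarrow> ev z p = 0 \<longrightarrow> p = 0"
  shows "\<forall>p n N. nat (N - n) = w \<longrightarrow> p \<in> laurentZ \<longrightarrow> ev z p = 0 \<longrightarrow> (\<forall>m. m < n \<or> m > N \<longrightarrow> p $$ m = 0)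
          \<longrightarrow> (\<exists>q\<in>laurentZ. p = d * q)"
proof (induction w rule: less_induct)
  case (less w)
  show ?case
  proof (intro allI impI)
    fix p :: K and n N :: int
    assume w: "nat (N - n) = w" and p: "p \<in> laurentZ" and pz: "ev z p = 0"
      and ps: "\<forall>m. m < n \<or> m > N \<longrightarrow> p $$ m = 0"
    show "\<exists>q\<in>laurentZ. p = d * q"
    proof (cases "N < n + k")
      case True
      have "p = 0" using short p pz ps True by force
      then show ?thesis by (intro bexI[of _ 0]) auto
    next
      case False
      define c where "c = p $$ n"
      have cZ: "c \<in> \<int>" using p by (simp add: c_def laurentZ_iff)
      define p' where "p' = p - lmono c n * d"
      have p'Z: "p' \<in> laurentZ" using p cZ dZ by (simp add: p'_def laurentZ_mono_mult)
      have "ev z p' = ev z p - of_rat c * z powi n * ev z d"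
        using p dZ z0 by (simp add: p'_def ev_diff laurentZ_Q laurentQ_mono_mult ev_lmono_mult)
      then have p'z: "ev z p' = 0" using pz dz by simp
      have p's: "\<forall>m. m < n + 1 \<or> m > N \<longrightarrow> p' $$ m = 0"
      proof (intro allI impI)
        fix m assume m: "m < n + 1 \<or> m > N"
        have pm: "p' $$ m = p $$ m - c * d $$ (m - n)" by (simp add: p'_def lmono_mult_nth)
        consider "m < n" | "m = n" | "m > N" using m by linarith
        then show "p' $$ m = 0"
        proof cases
          case 1 then show ?thesis using pm ps dlo by simp
        next
          case 2 then show ?thesis using pm d0 by (simp add: c_def)
        next
          case 3 then show ?thesis using pm ps dhi False by simp
        qed
      qed
      have "nat (N - (n + 1)) < w" using w False k1 by linarith
      then obtain q' where q': "q' \<in> laurentZ" "p' = d * q'"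
        using less.IH p'Z p'z p's by blast
      have "p = d * (lmono c n + q')" using q' by (simp add: p'_def algebra_simps)
      then show ?thesis using q' cZ by (intro bexI[of _ "lmono c n + q'"]) auto
    qed
  qed
qed

lemma laurent_bounded:
  assumes "p \<in> laurentQ" shows "\<exists>B. \<forall>m. m < -B \<or> m > B \<longrightarrow> p $$ m = 0"
proof -
  obtain B where B: "abs ` {n. p $$ n \<noteq> 0} \<subseteq> {..B}"
    using assms by (auto simp: laurentQ_iff finite_int_iff_bounded_le)
  show ?thesis
  proof (intro exI allI impI)
    fix m :: int assume "m < -B \<or> m > B"
    then have "abs m \<notin> {..B}" by auto
    then show "p $$ m = 0" using B by auto
  qed
qed

lemma div_lemma:
  fixes z :: "'b::field_char_0" and d :: K and k :: int
  assumes dZ: "d \<in> laurentZ" and d0: "d $$ 0 = 1" and dlo: "\<forall>m<0. d $$ m = 0" and dhi: "\<forall>m>k. d $$ m = 0"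
  and k1: "k \<ge> 1"
  and z0: "z \<noteq> 0" and dz: "ev z d = 0"
  and short: "\<forall>p n. p \<in> laurentZ \<longrightarrow> (\<forall>m. m < n \<or> m \<ge> n + k \<longrightarrow> p $$ m = 0) \<longrightarrow> ev z p = 0 \<longrightarrow> p = 0"
  and p: "p \<in> laurentZ" and pz: "ev z p = 0"
  shows "\<exists>q\<in>laurentZ. p = d * q"
proof -
  obtain B where B: "\<forall>m. m < -B \<or> m > B \<longrightarrow> p $$ m = 0" using laurent_bounded p laurentZ_Q by blast
  show ?thesis using div_main[OF dZ d0 dlo dhi k1 z0 dz short, where w="nat (B - (-B))"] p pz B by blast
qed

lemma sd_le_lbar:
  assumes f: "f \<in> laurentQ" and m: "f $$ m \<noteq> 0"
  shows "fls_subdegree f \<le> m \<and> m \<le> - fls_subdegree (lbar f)"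
proof
  show "fls_subdegree f \<le> m" using m by (rule fls_subdegree_leI)
  have "lbar f $$ (-m) \<noteq> 0" using f m by (simp add: lbar_nth)
  then have "fls_subdegree (lbar f) \<le> -m" by (rule fls_subdegree_leI)
  then show "m \<le> - fls_subdegree (lbar f)" by simp
qed

lemma laurent_unit:
  assumes p: "p \<in> laurentQ" and q: "q \<in> laurentQ" and pq: "p * q = 1"
  shows "\<exists>c n. p = lmono c n \<and> c \<noteq> 0"
proof -
  have p0: "p \<noteq> 0" and q0: "q \<noteq> 0" using pq by auto
  have bp0: "lbar p \<noteq> 0" and bq0: "lbar q \<noteq> 0" using p0 q0 p q lbar_eq0_iff by auto
  have "fls_subdegree p + fls_subdegree q = 0"
    using pq p0 q0 fls_subdegree_mult[of p q] by simp
  moreover have "lbar p * lbar q = 1" using pq p q by (metis lbar_mult lbar_1)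
  then have "fls_subdegree (lbar p) + fls_subdegree (lbar q) = 0"
    using bp0 bq0 fls_subdegree_mult[of "lbar p" "lbar q"] by simp
  moreover have "fls_subdegree p \<le> - fls_subdegree (lbar p)"
    using sd_le_lbar[OF p nth_fls_subdegree_nonzero[OF p0]] by simp
  moreover have "fls_subdegree q \<le> - fls_subdegree (lbar q)"
    using sd_le_lbar[OF q nth_fls_subdegree_nonzero[OF q0]] by simp
  ultimately have eq: "fls_subdegree p = - fls_subdegree (lbar p)" by linarith
  define n where "n = fls_subdegree p"
  have "p = lmono (p $$ n) n"
  proof (rule fls_eqI)
    fix m show "p $$ m = lmono (p $$ n) n $$ m"
    proof (cases "p $$ m = 0")
      case False
      then have "m = n" using sd_le_lbar[OF p False] eq by (simp add: n_def)
      then show ?thesis by simp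
    qed auto
  qed
  moreover have "p $$ n \<noteq> 0" using p0 by (simp add: n_def)
  ultimately show ?thesis by blast
qed

lemma lmono_eq_1: "lmono c n = 1 \<longleftrightarrow> c = 1 \<and> n = 0"
  by (metis lmono_1_0 lmono_nth one_neq_zero)

lemma laurentZ_unit:
  assumes p: "p \<in> laurentZ" and q: "q \<in> laurentZ" and pq: "p * q = 1"
  shows "\<exists>n. p = lmono 1 n \<or> p = lmono (-1) n"
proof -
  obtain c n where cn: "p = lmono c n" "c \<noteq> 0" using laurent_unit p q pq laurentZ_Q by blast
  have "q * p = 1" using pq by (simp add: mult.commute)
  then obtain c' n' where cn': "q = lmono c' n'" "c' \<noteq> 0" using laurent_unit p q laurentZ_Q by blast
  have "lmono (c * c') (n + n') = 1" using pq cn cn' by (simp add: lmono_mult_mono)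
  then have cc: "c * c' = 1" by (simp add: lmono_eq_1)
  have "c \<in> \<int>" "c' \<in> \<int>" using p q cn cn' by (auto simp: laurentZ_iff) (metis lmono_nth)+
  then obtain a b :: int where ab: "c = of_int a" "c' = of_int b" by (auto elim!: Ints_cases)
  then have "a * b = 1" using cc by (metis of_int_1 of_int_eq_iff of_int_mult)
  then have "a = 1 \<or> a = -1" by (metis zmult_eq_1_iff)
  then show ?thesis using cn ab by auto
qed

lemma square_lmono:
  fixes g :: K
  assumes gg: "g * g = lmono e k" and e: "e = 1 \<or> e = -1"
  shows "e = 1 \<and> (\<exists>m. k = 2*m \<and> (g = lmono 1 m \<or> g = lmono (-1) m))"
proof -
  have g0: "g \<noteq> 0" using gg e by (metis lmono_0 lmono_eq_iff mult_zero_left one_neq_zero zero_neq_neg_one)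
  define m where "m = fls_subdegree g"
  have "(g * g) $$ (m + m) = (g $$ m) * (g $$ m)" using fls_times_base[of g g] by (simp only: m_def)
  moreover have "g $$ m \<noteq> 0" using g0 by (simp add: m_def)
  ultimately have "lmono e k $$ (m + m) \<noteq> 0" using gg by simp
  then have k: "k = m + m" and e': "e = (g $$ m) * (g $$ m)"
    using gg \<open>(g * g) $$ (m + m) = (g $$ m) * (g $$ m)\<close> by (auto split: if_splits)
  have e1: "e = 1" using e e' by (metis neg_0_le_iff_le not_one_le_zero zero_le_square)
  define h where "h = g * lmono 1 (-m)"
  have "h * h = (g * g) * (lmono 1 (-m) * lmono 1 (-m))" by (simp add: h_def algebra_simps)
  also have "\<dots> = 1" using gg e1 k by (simp add: lmono_mult_mono lmono_1_0)
  finally have "h = 1 \<or> h = -1" by (simp add: square_eq_1_iff)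
  moreover have "g = h * lmono 1 m"
    by (simp add: h_def mult.assoc lmono_mult_mono lmono_1_0)
  ultimately have "g = lmono 1 m \<or> g = lmono (-1) m" by (auto simp: lmono_uminus)
  then show ?thesis using e1 k by auto
qed

definition om :: complex where "om = Complex (-1/2) (sqrt 3 / 2)"

lemma sqrt3_sq: "sqrt 3 * sqrt 3 = (3::real)" by simp

lemma om_sq: "om * om = -1 - om"
  by (simp add: om_def complex_eq_iff sqrt3_sq)
lemma om_cnj: "cnj om = -1 - om"
  by (simp add: om_def complex_eq_iff)
lemma om_cnj_mult: "om * cnj om = 1"
  by (simp add: om_def complex_eq_iff sqrt3_sq)
lemma om_nz [simp]: "om \<noteq> 0"
  using om_cnj_mult by auto
lemma om_inverse: "inverse om = cnj om"
  using om_cnj_mult by (metis inverse_unique)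
lemma om_cube: "om ^ 3 = 1"
proof -
  have "om ^ 3 = (om * om) * om" by (simp add: power3_eq_cube)
  also have "\<dots> = (-1 - om) * om" by (simp only: om_sq)
  also have "\<dots> = - om - om * om" by (simp add: algebra_simps)
  also have "\<dots> = 1" by (simp only: om_sq) simp
  finally show ?thesis .
qed
lemma om_Im: "Im om \<noteq> 0" by (simp add: om_def)

lemma cnj_of_rat [simp]: "cnj (of_rat r) = of_rat r"
  by (cases r) (simp add: of_rat_rat)

lemma of_rat_complex: "(of_rat r :: complex) = complex_of_real (of_rat r)"
  by (cases r) (simp add: of_rat_rat)

lemma ev_cnj: "ev (cnj z) f = cnj (ev z f)"
  by (simp add: ev_def)

lemma om_powi: "om powi n = (if n mod 3 = 0 then 1 else if n mod 3 = 1 then om else -1 - om)"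
proof -
  have n: "n = 3 * (n div 3) + n mod 3" by simp
  have "om powi n = om powi (3 * (n div 3) + n mod 3)" by simp
  also have "\<dots> = om powi (3 * (n div 3)) * om powi (n mod 3)"
    by (rule power_int_add) simp
  also have "om powi (3 * (n div 3)) = 1"
    by (simp add: power_int_mult om_cube)
  finally have e: "om powi n = om powi (n mod 3)" by simp
  have om2: "om ^ 2 = -1 - om" using om_sq by (simp add: power2_eq_square)
  have "n mod 3 = 0 \<or> n mod 3 = 1 \<or> n mod 3 = 2" by presburger
  then show ?thesis using e om2 by auto
qed

lemma ev_om_Z:
  assumes "p \<in> laurentZ" shows "\<exists>a b::int. ev om p = of_int a + of_int b * om"
  using assms
proof (induction p rule: laurentZ_induct)
  case zero then show ?case by (intro exI[of _ 0]) simp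
next
  case (step c n g)
  obtain a b :: int where ab: "ev om g = of_int a + of_int b * om" using step by blast
  obtain j :: int where j: "c = of_int j" using step by (auto elim!: Ints_cases)
  have cq: "(of_rat c :: complex) = of_int j" using j by simp
  have "ev om (lmono c n + g) = of_int j * om powi n + ev om g"
    using step by (simp add: ev_add laurentZ_Q ev_lmono cq)
  also have "\<dots> = of_int j * (if n mod 3 = 0 then 1 else if n mod 3 = 1 then om else -1 - om) + of_int a + of_int b * om"
    by (simp add: om_powi ab)
  finally have e: "ev om (lmono c n + g) = of_int j * (if n mod 3 = 0 then 1 else if n mod 3 = 1 then om else -1 - om) + of_int a + of_int b * om" .
  show ?case
  proof (cases "n mod 3 = 0")
    case True then show ?thesis using e by (intro exI[of _ "j + a"] exI[of _ b]) (simp add: algebra_simps)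
  next
    case False
    show ?thesis
    proof (cases "n mod 3 = 1")
      case True then show ?thesis using e by (intro exI[of _ a] exI[of _ "j + b"]) (simp add: algebra_simps)
    next
      case F2: False
      then show ?thesis using e False by (intro exI[of _ "a - j"] exI[of _ "b - j"]) (simp add: algebra_simps)
    qed
  qed
qed

lemma om_plus_cnj: "om + cnj om = -1" by (simp add: om_cnj)

lemma eis_norm: "(of_int a + of_int b * om) * (of_int a + of_int b * cnj om) = of_int (a*a - a*b + b*b)"
proof -
  have "(of_int a + of_int b * om) * (of_int a + of_int b * cnj om)
        = of_int a * of_int a + of_int a * of_int b * (om + cnj om) + of_int b * of_int b * (om * cnj om)"
    by (simp add: algebra_simps)
  also have "\<dots> = of_int (a*a - a*b + b*b)" by (simp only: om_cnj_mult om_plus_cnj) simp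
  finally show ?thesis .
qed

lemma eis_units:
  fixes a b :: int
  assumes "a*a - a*b + b*b = 1"
  shows "(a = 1 \<and> b = 0) \<or> (a = -1 \<and> b = 0) \<or> (a = 0 \<and> b = 1) \<or> (a = 0 \<and> b = -1) \<or> (a = 1 \<and> b = 1) \<or> (a = -1 \<and> b = -1)"
proof -
  have 1: "(2*a - b)*(2*a-b) + 3*(b*b) = 4" using assms by (simp add: algebra_simps)
  have 2: "(2*b - a)*(2*b-a) + 3*(a*a) = 4" using assms by (simp add: algebra_simps)
  have "b*b \<le> 1" using 1 by (smt (verit, del_insts) sum_squares_ge_zero)
  then have b: "b \<ge> -1 \<and> b \<le> 1" by (smt (verit) less_1_mult mult_neg_neg square_eq_1_iff)
  have "a*a \<le> 1" using 2 by (smt (verit, del_insts) sum_squares_ge_zero)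
  then have a: "a \<ge> -1 \<and> a \<le> 1" by (smt (verit) less_1_mult mult_neg_neg square_eq_1_iff)
  have "a \<in> {-1,0,1}" "b \<in> {-1,0,1}" using a b by auto
  then show ?thesis using assms by auto
qed

lemma ev_om_S: "ev om (1 + fls_X + fls_X^2) = 0"
  by (simp add: ev_add ev_mult laurentZ_Q om_sq power2_eq_square)

lemma ev_om_Phi: "ev om Phi = 0"
  by (simp add: Phi_def ev_add laurentZ_Q om_inverse om_cnj)

lemma S_nth: "(1 + fls_X + fls_X^2 :: K) $$ m = (if m = 0 \<or> m = 1 \<or> m = 2 then 1 else 0)"
  by simp

lemma div_S:
  assumes p: "p \<in> laurentZ" and pz: "ev om p = 0"
  shows "\<exists>q\<in>laurentZ. p = (1 + fls_X + fls_X^2) * q"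
proof (rule div_lemma[where k=2 and z=om])
  show "\<forall>p n. p \<in> laurentZ \<longrightarrow> (\<forall>m. m < n \<or> m \<ge> n + 2 \<longrightarrow> p $$ m = 0) \<longrightarrow> ev om p = 0 \<longrightarrow> p = 0"
  proof (intro allI impI)
    fix p :: K and n :: int
    assume pZ: "p \<in> laurentZ" and ps: "\<forall>m. m < n \<or> m \<ge> n + 2 \<longrightarrow> p $$ m = 0" and pz: "ev om p = 0"
    have "ev om p = (\<Sum>m\<in>{n, n+1}. of_rat (p $$ m) * om powi m)"
      by (rule ev_superset) (use ps in \<open>auto\<close>, smt (verit) mem_Collect_eq)
    also have "\<dots> = om powi n * (of_rat (p $$ n) + of_rat (p $$ (n+1)) * om)"
      by (simp add: power_int_add algebra_simps)
    finally have "of_rat (p $$ n) + of_rat (p $$ (n+1)) * om = 0" using pz by simp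
    then have "Im (of_rat (p $$ n) + of_rat (p $$ (n+1)) * om) = 0" "Re (of_rat (p $$ n) + of_rat (p $$ (n+1)) * om) = 0"
      by simp_all
    then have "of_rat (p $$ (n+1)) * sqrt 3 / 2 = (0::real)" "of_rat (p $$ n) - of_rat (p $$ (n+1)) / 2 = (0::real)"
      by (simp_all add: om_def of_rat_complex)
    then have c: "p $$ n = 0" "p $$ (n+1) = 0" by auto
    show "p = 0"
    proof (rule fls_eqI)
      fix m show "p $$ m = 0 $$ m"
      proof (cases "m < n \<or> m \<ge> n + 2")
        case True then show ?thesis using ps by auto
      next
        case False then have "m = n \<or> m = n + 1" by linarith
        then show ?thesis using c by auto
      qed
    qed
  qed
qed (use p pz ev_om_S in auto)

lemma div_T:
  assumes p: "p \<in> laurentZ" and pz: "ev (-1::rat) p = 0"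
  shows "\<exists>q\<in>laurentZ. p = (1 + fls_X) * q"
proof (rule div_lemma[where k=1 and z="-1::rat"])
  show "\<forall>p n. p \<in> laurentZ \<longrightarrow> (\<forall>m. m < n \<or> m \<ge> n + 1 \<longrightarrow> p $$ m = 0) \<longrightarrow> ev (-1::rat) p = 0 \<longrightarrow> p = 0"
  proof (intro allI impI)
    fix p :: K and n :: int
    assume pZ: "p \<in> laurentZ" and ps: "\<forall>m. m < n \<or> m \<ge> n + 1 \<longrightarrow> p $$ m = 0" and pz: "ev (-1::rat) p = 0"
    have "ev (-1::rat) p = (\<Sum>m\<in>{n}. of_rat (p $$ m) * (-1) powi m)"
      by (rule ev_superset) (use ps in \<open>auto\<close>, smt (verit) mem_Collect_eq)
    then have "of_rat (p $$ n) * (-1::rat) powi n = 0" using pz by simp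
    moreover have "(-1::rat) powi n \<noteq> 0" by simp
    ultimately have c: "p $$ n = 0" by simp
    show "p = 0"
    proof (rule fls_eqI)
      fix m show "p $$ m = 0 $$ m"
      proof (cases "m < n \<or> m \<ge> n + 1")
        case True then show ?thesis using ps by auto
      next
        case False then have "m = n" by linarith
        then show ?thesis using c by auto
      qed
    qed
  qed
qed (use p pz in \<open>auto simp: ev_add laurentZ_Q\<close>)

definition Aexp :: "'a::field \<Rightarrow> 'a \<Rightarrow> 'a \<Rightarrow> 'a \<Rightarrow> 'a \<Rightarrow> 'a \<Rightarrow> 'a \<Rightarrow> 'a \<Rightarrow> 'a \<Rightarrow> 'a \<Rightarrow> 'a^3^3" where
 "Aexp t ti u x xb y yb e q1 q2 = vector [
   vector [u*x + e, t*(u*y + e), 1 - (u*x + e) - t*(u*y+e)],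
   vector [e - u*yb, t*e + u*q1 + u*q2, 1 - (e - u*yb) - (t*e + u*q1 + u*q2)],
   vector [e + ti*u*yb, ti*(1 - u*y - e - (t*e + u*q1 + u*q2)),
           1 - (e + ti*u*yb) - ti*(1 - u*y - e - (t*e + u*q1 + u*q2))]]"

definition Tm :: "'a::field \<Rightarrow> 'a^3^3" where
  "Tm t = vector [vector [1, t + t^2, 0], vector [1, -1, t], vector [1, -1, -1]]"
definition Dm :: "'a::field \<Rightarrow> 'a \<Rightarrow> 'a \<Rightarrow> 'a \<Rightarrow> 'a^3^3" where
  "Dm a b c d = vector [vector [1,0,0], vector [0,a,b], vector [0,c,d]]"
definition Gm :: "'a::field \<Rightarrow> 'a^3^3" where
  "Gm t = vector [vector [-t/(1+t+t^2), 0, 0], vector [0, t/(1+t+t^2), 0], vector [0,0,1]]"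
definition Jm :: "'a::field \<Rightarrow> 'a \<Rightarrow> 'a^3^3" where
  "Jm t ti = vector [vector [1, - ti, - ti], vector [- t, 1, - ti], vector [- t, - t, 1]]"

lemmas mat_simps = vec_eq_iff forall_3 matrix_matrix_mult_def sum_3 transpose_def vector_3

lemma L1:
  fixes t ti u x xb y yb e q1 q2 :: "'a::field"
  assumes tt: "t*ti = 1" and S0: "1+t+t^2 \<noteq> 0" and P0: "1 + t \<noteq> 0"
  and he: "(1+t+t^2)*e = 1 - u*x" and hq1: "(1+t)*q1 = x + t*xb" and hq2: "(1+t)*q2 = yb - y"
  shows "Aexp t ti u x xb y yb e q1 q2 ** Tm t = Tm t ** Dm (u*x) (u*y) (-u*(1+ti+t)*yb) (u*xb)"
proof -
  have t0: "t \<noteq> 0" using tt by auto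
  have ti: "ti = 1/t" using tt t0 by (simp add: field_simps)
  define S where "S = 1+t+t^2"
  define P where "P = 1+t"
  have S0': "S \<noteq> 0" and P0': "P \<noteq> 0" using S0 P0 by (simp_all add: S_def P_def)
  have e: "e = (1 - u*x)/S" using he S0 by (simp add: field_simps S_def)
  have q1: "q1 = (x + t*xb)/P" using hq1 P0 by (simp add: field_simps P_def)
  have q2: "q2 = (yb - y)/P" using hq2 P0 by (simp add: field_simps P_def)
  show ?thesis
    unfolding Aexp_def Tm_def Dm_def mat_simps ti e q1 q2
    using S0' P0' t0 apply (simp add: field_simps)
    apply (simp add: S_def P_def)
    apply algebra
    done
qed

lemma L2:
  fixes t ti :: "'a::field"
  assumes tt: "t*ti = 1" and S0: "1+t+t^2 \<noteq> 0"
  shows "Tm ti ** Gm t ** transpose (Tm t) = Jm t ti"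
proof -
  have t0: "t \<noteq> 0" using tt by auto
  have ti: "ti = 1/t" using tt t0 by (simp add: field_simps)
  define S where "S = 1+t+t^2"
  have S0': "S \<noteq> 0" using S0 by (simp add: S_def)
  have G: "Gm t = vector [vector [-t/S, 0, 0], vector [0, t/S, 0], vector [0,0,1]]" by (simp add: Gm_def S_def)
  show ?thesis
    unfolding G Jm_def Tm_def mat_simps ti
    using S0' t0 apply (simp add: field_simps)
    apply (simp add: S_def)
    apply algebra
    done
qed

lemma L3:
  fixes t ti u ub x xb y yb :: "'a::field"
  assumes tt: "t*ti = 1" and uu: "u*ub = 1" and S0: "1+t+t^2 \<noteq> 0"
  and rel: "x*xb + (1+ti+t)*y*yb = 1"
  shows "Dm (ub*xb) (ub*yb) (-ub*(1+t+ti)*y) (ub*x) ** Gm t ** transpose (Dm (u*x) (u*y) (-u*(1+ti+t)*yb) (u*xb)) = Gm t"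
proof -
  have t0: "t \<noteq> 0" using tt by auto
  have ti: "ti = 1/t" using tt t0 by (simp add: field_simps)
  have u0: "u \<noteq> 0" using uu by auto
  have ub: "ub = 1/u" using uu u0 by (simp add: field_simps)
  define S where "S = 1+t+t^2"
  have S0': "S \<noteq> 0" using S0 by (simp add: S_def)
  have G: "Gm t = vector [vector [-t/S, 0, 0], vector [0, t/S, 0], vector [0,0,1]]" by (simp add: Gm_def S_def)
  have relp: "t*(x*xb) + (1+t+t^2)*(y*yb) = t"
  proof -
    have "t * (x*xb + (1+ti+t)*y*yb) = t" using rel by simp
    moreover have "t*(x*xb) + (1+t+t^2)*(y*yb) = t * (x*xb + (1+ti+t)*y*yb) + (1 - t*ti)*(y*yb)"
      by (simp add: algebra_simps power2_eq_square)
    ultimately show ?thesis using tt by simp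
  qed
  show ?thesis
    unfolding G Dm_def mat_simps ti ub
    using S0' t0 u0 apply (simp add: field_simps)
    apply (simp add: S_def)
    apply (insert relp)
    apply algebra
    done
qed

lemma L4:
  fixes Ab A T T' D1 D2 G J :: "'a::comm_ring_1^3^3"
  assumes "Ab ** T' = T' ** D1" "A ** T = T ** D2" "D1 ** G ** transpose D2 = G"
    "T' ** G ** transpose T = J"
  shows "Ab ** J ** transpose A = J"
proof -
  have "Ab ** J ** transpose A = (Ab ** T') ** G ** (transpose (A ** T))"
    by (simp add: assms(4)[symmetric] matrix_mul_assoc matrix_transpose_mul)
  also have "\<dots> = T' ** (D1 ** G ** transpose D2) ** transpose T"
    by (simp add: assms(1,2) matrix_mul_assoc matrix_transpose_mul)
  also have "\<dots> = J" using assms(3,4) by simp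
  finally show ?thesis .
qed

lemma det_Tm: "det (Tm t) = (1 + t) * (1 + t + t^2)"
  by (simp add: Tm_def det_3 algebra_simps power2_eq_square)

lemma det_Dm: "det (Dm a b c d) = a * d - b * c"
  by (simp add: Dm_def det_3)

lemma L5:
  fixes A :: "'a::field^3^3"
  assumes "A ** Tm t = Tm t ** Dm a b c d" "1 + t \<noteq> 0" "1+t+t^2 \<noteq> 0"
  shows "det A = a * d - b * c"
proof -
  have "det A * det (Tm t) = det (Tm t) * det (Dm a b c d)"
    using assms(1) by (metis det_mul)
  moreover have "det (Tm t) \<noteq> 0" using assms(2,3) by (simp add: det_Tm)
  ultimately show ?thesis by (simp add: det_Dm)
qed

lemma L6:
  fixes t ti u x xb y yb e q1 q2 :: "'a::field"
  assumes tt: "t*ti = 1" and S0: "1+t+t^2 \<noteq> 0" and P0: "1 + t \<noteq> 0"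
  and he: "(1+t+t^2)*e = 1 - u*x" and hq1: "(1+t)*q1 = x + t*xb" and hq2: "(1+t)*q2 = yb - y"
  shows "vector [t, t^2, t^3] v* Aexp t ti u x xb y yb e q1 q2 = vector [t, t^2, t^3]"
proof -
  have t0: "t \<noteq> 0" using tt by auto
  have ti: "ti = 1/t" using tt t0 by (simp add: field_simps)
  define S where "S = 1+t+t^2"
  define P where "P = 1+t"
  have S0': "S \<noteq> 0" and P0': "P \<noteq> 0" using S0 P0 by (simp_all add: S_def P_def)
  have e: "e = (1 - u*x)/S" using he S0 by (simp add: field_simps S_def)
  have q1: "q1 = (x + t*xb)/P" using hq1 P0 by (simp add: field_simps P_def)
  have q2: "q2 = (yb - y)/P" using hq2 P0 by (simp add: field_simps P_def)
  show ?thesis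
    unfolding Aexp_def vec_eq_iff forall_3 vector_matrix_mult_def sum_3 vector_3 ti e q1 q2
    using S0' P0' t0 apply (simp add: field_simps)
    apply (simp add: S_def P_def)
    apply algebra
    done
qed

lemma L7: "Aexp t ti u x xb y yb e q1 q2 *v vector [1,1,1] = (vector [1,1,1] :: 'a::field^3)"
  unfolding Aexp_def vec_eq_iff forall_3 matrix_vector_mult_def sum_3 vector_3 by simp

lemma L8:
  fixes t ti u x xb y yb e q1 q2 :: "'a::field"
  assumes tt: "t*ti = 1" and S0: "1+t+t^2 \<noteq> 0" and P0: "1 + t \<noteq> 0"
  and he: "(1+t+t^2)*e = 1 - u*x" and hq1: "(1+t)*q1 = x + t*xb" and hq2: "(1+t)*q2 = yb - y"
  defines "A \<equiv> Aexp t ti u x xb y yb e q1 q2"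
  defines "g11 \<equiv> (A$1$1 * (1 + t + t^2) - 1) / (t * (1 + t))"
      and "g12 \<equiv> (A$1$1 + A$1$2 * (1 + t) - 1) / (t * (1 + t))"
      and "g21 \<equiv> (A$2$1 * (1 + t + t^2) - 1) / (t * (1 + t))"
      and "g22 \<equiv> (A$2$1 + A$2$2 * (1 + t) - 1) / (t * (1 + t))"
  shows "g11 = u*x" "g12 = u*y" "ti * g11 + (1 + t) * g21 = -u*(1+ti+t)*yb"
        "ti * g12 + (1 + t) * g22 = u*xb"
proof -
  have t0: "t \<noteq> 0" using tt by auto
  have ti: "ti = 1/t" using tt t0 by (simp add: field_simps)
  define S where "S = 1+t+t^2"
  define P where "P = 1+t"
  have S0': "S \<noteq> 0" and P0': "P \<noteq> 0" using S0 P0 by (simp_all add: S_def P_def)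
  have e: "e = (1 - u*x)/S" using he S0 by (simp add: field_simps S_def)
  have q1: "q1 = (x + t*xb)/P" using hq1 P0 by (simp add: field_simps P_def)
  have q2: "q2 = (yb - y)/P" using hq2 P0 by (simp add: field_simps P_def)
  have A: "A$1$1 = u*x + e" "A$1$2 = t*(u*y + e)" "A$2$1 = e - u*yb" "A$2$2 = t*e + u*q1 + u*q2"
    by (simp_all add: A_def Aexp_def)
  have tP: "t * (1 + t) \<noteq> 0" using t0 P0 by simp
  have P1: "1 + t = P" by (simp add: P_def)
  have tP: "t * P \<noteq> 0" using t0 P0' by simp
  show "g11 = u*x" unfolding g11_def A e P1 using S0' P0' t0 tP
    apply (simp add: field_simps) apply (simp add: S_def P_def) apply algebra done
  show "g12 = u*y" unfolding g12_def A e P1 using S0' P0' t0 tP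
    apply (simp add: field_simps) apply (simp add: S_def P_def) apply algebra done
  show "ti * g11 + (1 + t) * g21 = -u*(1+ti+t)*yb" unfolding g11_def g21_def A e ti P1 using S0' P0' t0 tP
    apply (simp add: field_simps) apply (simp add: S_def P_def) apply algebra done
  show "ti * g12 + (1 + t) * g22 = u*xb" unfolding g12_def g22_def A e q1 q2 ti P1 using S0' P0' t0 tP
    apply (simp add: field_simps) apply (simp add: S_def P_def) apply algebra done
qed

definition adj3 :: "'a::comm_ring_1^3^3 \<Rightarrow> 'a^3^3" where
  "adj3 A = vector [
    vector [A$2$2*A$3$3 - A$2$3*A$3$2, A$1$3*A$3$2 - A$1$2*A$3$3, A$1$2*A$2$3 - A$1$3*A$2$2],
    vector [A$2$3*A$3$1 - A$2$1*A$3$3, A$1$1*A$3$3 - A$1$3*A$3$1, A$1$3*A$2$1 - A$1$1*A$2$3],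
    vector [A$2$1*A$3$2 - A$2$2*A$3$1, A$1$2*A$3$1 - A$1$1*A$3$2, A$1$1*A$2$2 - A$1$2*A$2$1]]"

lemma adj3_inv:
  fixes A :: "'a::comm_ring_1^3^3"
  assumes "c * det A = 1"
  shows "A ** (\<chi> i j. c * adj3 A $ i $ j) = mat 1" "(\<chi> i j. c * adj3 A $ i $ j) ** A = mat 1"
proof -
  have e: "\<And>i j. mat 1 $ i $ j = (if i = j then c * det A else (0::'a))" using assms by (simp add: mat_def)
  show "A ** (\<chi> i j. c * adj3 A $ i $ j) = mat 1" "(\<chi> i j. c * adj3 A $ i $ j) ** A = mat 1"
    unfolding vec_eq_iff forall_3 matrix_matrix_mult_def sum_3 e adj3_def det_3
    by (simp_all add: algebra_simps)
qed

lemma XXi: "fls_X * fls_X_inv = (1::K)"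
  by (simp add: fls_inverse_X[symmetric])
lemma XiX: "fls_X_inv * fls_X = (1::K)"
  by (simp add: fls_inverse_X[symmetric])

lemma S_nz: "(1 + fls_X + fls_X^2 :: K) \<noteq> 0"
proof
  assume "(1 + fls_X + fls_X^2 :: K) = 0"
  then have "(1 + fls_X + fls_X^2 :: K) $$ 0 = 0" by simp
  then show False by simp
qed
lemma P_nz: "(1 + fls_X :: K) \<noteq> 0"
proof
  assume "(1 + fls_X :: K) = 0"
  then have "(1 + fls_X :: K) $$ 0 = 0" by simp
  then show False by simp
qed
lemma Si_nz: "(1 + fls_X_inv + fls_X_inv^2 :: K) \<noteq> 0"
proof
  assume "(1 + fls_X_inv + fls_X_inv^2 :: K) = 0"
  then have "(1 + fls_X_inv + fls_X_inv^2 :: K) $$ 0 = 0" by simp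
  then show False by (simp add: power2_eq_square fls_X_inv_times_conv_shift)
qed
lemma Pi_nz: "(1 + fls_X_inv :: K) \<noteq> 0"
proof
  assume "(1 + fls_X_inv :: K) = 0"
  then have "(1 + fls_X_inv :: K) $$ 0 = 0" by simp
  then show False by simp
qed

lemma laurentQ_Phi [simp]: "Phi \<in> laurentQ" and laurentZ_Phi [simp]: "Phi \<in> laurentZ"
  by (simp_all add: Phi_def laurentZ_Q)
lemma lbar_Phi [simp]: "lbar Phi = Phi"
  by (simp add: Phi_def lbar_add)

lemma pclass_self: "M \<in> pclass M"
  unfolding pclass_def by (intro CollectI exI[of _ 1]) (simp add: vec_eq_iff)

lemma pclass_eq: "pclass P = pclass N \<Longrightarrow> \<exists>c. c \<noteq> 0 \<and> N = (\<chi> i j. c * P $ i $ j)"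
  using pclass_self[of N] unfolding pclass_def by auto

lemma pclass_scale:
  assumes c: "c \<noteq> 0" shows "pclass (\<chi> i j. c * M $ i $ j) = pclass M"
proof
  show "pclass (\<chi> i j. c * M $ i $ j) \<subseteq> pclass M"
  proof
    fix N assume "N \<in> pclass (\<chi> i j. c * M $ i $ j)"
    then obtain d where d: "d \<noteq> 0" "N = (\<chi> i j. d * (\<chi> i j. c * M $ i $ j) $ i $ j)"
      unfolding pclass_def by auto
    then have "N = (\<chi> i j. (d*c) * M $ i $ j)" by (simp add: vec_eq_iff mult.assoc)
    moreover have "d * c \<noteq> 0" using d c by simp
    ultimately show "N \<in> pclass M" unfolding pclass_def by blast
  qed
  show "pclass M \<subseteq> pclass (\<chi> i j. c * M $ i $ j)"
  proof
    fix N assume "N \<in> pclass M"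
    then obtain d where d: "d \<noteq> 0" "N = (\<chi> i j. d * M $ i $ j)"
      unfolding pclass_def by auto
    then have "N = (\<chi> i j. (d/c) * (\<chi> i j. c * M $ i $ j) $ i $ j)" using c by (simp add: vec_eq_iff)
    moreover have "d / c \<noteq> 0" using d c by simp
    ultimately show "N \<in> pclass (\<chi> i j. c * M $ i $ j)" unfolding pclass_def by blast
  qed
qed

lemma det_scale2: "det (\<chi> i j. c * Q $ i $ j :: K^2^2) = c * c * det Q"
  by (simp add: det_2 algebra_simps)

lemma det2_laurentZ: "(\<forall>i j. (M::K^2^2) $ i $ j \<in> laurentZ) \<Longrightarrow> det M \<in> laurentZ"
  by (simp add: det_2)

lemma GLm_det_unit:
  assumes "(M::K^2^2) \<in> GLm laurentZ" shows "\<exists>n. det M = lmono 1 n \<or> det M = lmono (-1) n"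
proof -
  obtain N where N: "\<forall>i j. N $ i $ j \<in> laurentZ" "M ** N = mat 1" and M: "\<forall>i j. M $ i $ j \<in> laurentZ"
    using assms unfolding GLm_def by auto
  have "det M * det N = 1" using N(2) by (metis det_mul det_I)
  then show ?thesis using laurentZ_unit det2_laurentZ N(1) M by blast
qed

lemma sign_lemma:
  fixes m11 m12 m21 m22 g1 g2 b :: K
  assumes Z: "m11 \<in> laurentQ" "m12 \<in> laurentQ" "m21 \<in> laurentQ" "m22 \<in> laurentQ"
    and G: "g1 \<in> laurentQ" "g2 \<in> laurentQ"
    and e: "m11 = b*g1" "m12 = b*g2" "m21 = b*(-Phi*lbar g2)" "m22 = b*lbar g1"
    and D: "b*b*(g1*lbar g1 + Phi*g2*lbar g2) = 1"
  shows "\<exists>s. (s = 1 \<or> s = -1) \<and> m22 = s * lbar m11 \<and> m21 = - s * Phi * lbar m12"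
proof -
  define DQ where "DQ = g1*lbar g1 + Phi*g2*lbar g2"
  have DQ: "DQ \<in> laurentQ" using G by (simp add: DQ_def)
  have bDQ: "lbar DQ = DQ" using G by (simp add: DQ_def lbar_add lbar_mult algebra_simps)
  have DQ0: "DQ \<noteq> 0" using D by (auto simp: DQ_def)
  have D': "b*b*DQ = 1" using D by (simp add: DQ_def)
  have h1: "m11*m11*DQ = g1*g1"
  proof -
    have "m11*m11*DQ = (b*b*DQ)*(g1*g1)" by (simp add: e algebra_simps)
    then show ?thesis using D' by simp
  qed
  have h1b: "lbar m11 * lbar m11 * DQ = lbar g1 * lbar g1"
    using arg_cong[OF h1, of lbar] Z G DQ by (simp add: lbar_mult bDQ)
  have h2: "m22*m22*DQ = lbar g1 * lbar g1"
  proof -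
    have "m22*m22*DQ = (b*b*DQ)*(lbar g1 * lbar g1)" by (simp add: e algebra_simps)
    then show ?thesis using D' by simp
  qed
  have "m22*m22 = lbar m11 * lbar m11" using h1b h2 DQ0 by (metis mult_right_cancel)
  then have s1: "m22 = lbar m11 \<or> m22 = - lbar m11" by (simp add: square_eq_iff)
  have h3: "m12*m12*DQ = g2*g2"
  proof -
    have "m12*m12*DQ = (b*b*DQ)*(g2*g2)" by (simp add: e algebra_simps)
    then show ?thesis using D' by simp
  qed
  have h3b: "lbar m12 * lbar m12 * DQ = lbar g2 * lbar g2"
    using arg_cong[OF h3, of lbar] Z G DQ by (simp add: lbar_mult bDQ)
  have h4: "m21*m21*DQ = (Phi * lbar m12) * (Phi * lbar m12) * DQ"
  proof -
    have "m21*m21*DQ = (b*b*DQ)*(Phi*Phi*(lbar g2 * lbar g2))" by (simp add: e algebra_simps)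
    also have "\<dots> = Phi*Phi*(lbar m12 * lbar m12 * DQ)" using D' h3b by simp
    finally show ?thesis by (simp add: algebra_simps)
  qed
  have "m21*m21 = (Phi * lbar m12) * (Phi * lbar m12)" using h4 DQ0 by (metis mult_right_cancel)
  then have s2: "m21 = Phi * lbar m12 \<or> m21 = - (Phi * lbar m12)" by (simp add: square_eq_iff)
  show ?thesis
  proof (cases "g1 = 0")
    case True
    then have "m11 = 0" "m22 = 0" using e G by simp_all
    then show ?thesis using s2 by (intro exI[of _ "if m21 = - (Phi * lbar m12) then 1 else -1"]) auto
  next
    case False
    then have bg1: "lbar g1 \<noteq> 0" using G lbar_eq0_iff by blast
    have c1: "m21 * lbar g1 = - Phi * lbar g2 * m22" by (simp add: e algebra_simps)
    have "m11 * g2 = m12 * g1" by (simp add: e algebra_simps)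
    then have c2: "lbar m11 * lbar g2 = lbar m12 * lbar g1"
      using arg_cong[of _ _ lbar] Z G by (metis lbar_mult)
    obtain s :: K where s: "s = 1 \<or> s = -1" "m22 = s * lbar m11" using s1 by (metis mult_1 mult_minus1)
    have "m21 * lbar g1 = (- s * Phi * lbar m12) * lbar g1"
    proof -
      have "m21 * lbar g1 = - s * Phi * (lbar m11 * lbar g2)" using c1 s(2) by (simp add: algebra_simps)
      also have "\<dots> = (- s * Phi * lbar m12) * lbar g1" using c2 by (simp add: algebra_simps)
      finally show ?thesis .
    qed
    then have "m21 = - s * Phi * lbar m12" using bg1 by (metis mult_right_cancel)
    then show ?thesis using s by blast
  qed
qed

lemma ev1_lbar: "f \<in> laurentQ \<Longrightarrow> ev (1::rat) (lbar f) = ev 1 f"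
  by (simp add: ev_lbar)

lemma sign_pos:
  fixes m11 m12 s :: K
  assumes Z: "m11 \<in> laurentQ" "m12 \<in> laurentQ" and s: "s = 1 \<or> s = -1"
    and h: "s * (m11 * lbar m11 + Phi * m12 * lbar m12) = 1"
  shows "s = 1"
proof (rule ccontr)
  assume "s \<noteq> 1"
  then have "s = -1" using s by simp
  then have "- (m11 * lbar m11 + Phi * m12 * lbar m12) = 1" using h by simp
  then have "ev (1::rat) (- (m11 * lbar m11 + Phi * m12 * lbar m12)) = 1" by simp
  then have h1: "- ev (1::rat) (m11 * lbar m11 + Phi * m12 * lbar m12) = 1" by (simp only: ev_uminus)
  have P3: "ev (1::rat) Phi = 3" by (simp add: Phi_def ev_add laurentZ_Q)
  have "ev (1::rat) (m11 * lbar m11 + Phi * m12 * lbar m12) = ev 1 m11 * ev 1 m11 + 3 * (ev 1 m12 * ev (1::rat) m12)"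
    using Z by (simp add: ev_add ev_mult ev1_lbar P3)
  then have "- (ev 1 m11 * ev 1 m11 + 3 * (ev 1 m12 * ev (1::rat) m12)) = 1" using h1 by simp
  moreover have "ev 1 m11 * ev 1 m11 + 3 * (ev 1 m12 * ev (1::rat) m12) \<ge> 0" by simp
  ultimately show False by linarith
qed

lemma extract_U1:
  assumes "X \<in> U1"
  shows "\<exists>xx yy. xx \<in> laurentZ \<and> yy \<in> laurentZ \<and> xx * lbar xx + Phi * yy * lbar yy = 1 \<and>
           X = pclass (vector [vector [xx, yy], vector [- Phi * lbar yy, lbar xx]])"
proof -
  obtain B0 where XU: "X \<in> UZ" and XB: "X = pclass B0" and dB: "det B0 = 1"
    using assms unfolding U1_def by auto
  obtain g1 g2 where G: "g1 \<in> laurentQ" "g2 \<in> laurentQ"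
    and XQ: "X = pclass (vector [vector [g1, g2], vector [- Phi * lbar g2, lbar g1]])"
    using XU unfolding UZ_def quatQ_def by auto
  define Q :: "K^2^2" where "Q = vector [vector [g1, g2], vector [- Phi * lbar g2, lbar g1]]"
  obtain M0 where M0: "M0 \<in> GLm laurentZ" "X = pclass M0"
    using XU unfolding UZ_def PGL2_def by auto
  obtain b where b: "b \<noteq> 0" "B0 = (\<chi> i j. b * Q $ i $ j)" using pclass_eq[of Q B0] XB XQ Q_def by auto
  obtain a where a: "a \<noteq> 0" "M0 = (\<chi> i j. a * Q $ i $ j)" using pclass_eq[of Q M0] M0 XQ Q_def by auto
  define DQ where "DQ = g1*lbar g1 + Phi*g2*lbar g2"
  have detQ: "det Q = DQ" by (simp add: Q_def DQ_def det_2)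
  have bD: "b*b*DQ = 1" using dB b by (simp add: det_scale2 detQ)
  have aD: "det M0 = a*a*DQ" using a by (simp add: det_scale2 detQ)
  obtain n where n: "det M0 = lmono 1 n \<or> det M0 = lmono (-1) n" using GLm_det_unit M0(1) by blast
  then obtain ep where ep: "ep = 1 \<or> ep = -1" "det M0 = lmono ep n" by blast
  define g where "g = a / b"
  have "g * g = a*a*DQ"
  proof -
    have "g * g = (a*a) / (b*b)" by (simp add: g_def)
    moreover have "inverse (b*b) = DQ" using bD by (metis inverse_unique)
    ultimately show ?thesis by (simp add: divide_inverse mult.assoc)
  qed
  then have "g * g = lmono ep n" using aD ep by simp
  then obtain m where m: "g = lmono 1 m \<or> g = lmono (-1) m" using square_lmono ep(1) by blast
  then obtain sg where sg: "sg = 1 \<or> sg = -1" "g = lmono sg m" by blast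
  have ginv: "lmono sg (-m) * g = 1" using sg by (auto simp: lmono_mult_mono lmono_1_0)
  have M0Z: "\<forall>i j. M0 $ i $ j \<in> laurentZ" using M0(1) unfolding GLm_def by auto
  have Bent: "B0 $ i $ j = lmono sg (-m) * M0 $ i $ j" for i j
  proof -
    have "B0 $ i $ j = b * Q $ i $ j" using b by simp
    also have "\<dots> = (lmono sg (-m) * g) * b * Q $ i $ j" using ginv by simp
    also have "\<dots> = lmono sg (-m) * (a * Q $ i $ j)" using b by (simp add: g_def)
    finally show ?thesis using a by simp
  qed
  have BZ: "B0 $ i $ j \<in> laurentZ" for i j
    using Bent M0Z sg(1) by (auto intro!: laurentZ_mono_mult)
  define m11 m12 m21 m22 where "m11 = B0$1$1" and "m12 = B0$1$2" and "m21 = B0$2$1" and "m22 = B0$2$2"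
  have mZ: "m11 \<in> laurentZ" "m12 \<in> laurentZ" "m21 \<in> laurentZ" "m22 \<in> laurentZ"
    using BZ by (simp_all add: m11_def m12_def m21_def m22_def)
  have me: "m11 = b*g1" "m12 = b*g2" "m21 = b*(-Phi*lbar g2)" "m22 = b*lbar g1"
    using b by (simp_all add: m11_def m12_def m21_def m22_def Q_def)
  obtain s where s: "s = 1 \<or> s = -1" "m22 = s * lbar m11" "m21 = - s * Phi * lbar m12"
    using sign_lemma[OF laurentZ_Q[OF mZ(1)] laurentZ_Q[OF mZ(2)] laurentZ_Q[OF mZ(3)] laurentZ_Q[OF mZ(4)] G me]
      bD by (auto simp: DQ_def)
  have "det B0 = m11 * m22 - m12 * m21" by (simp add: det_2 m11_def m12_def m21_def m22_def)
  then have hs: "s * (m11 * lbar m11 + Phi * m12 * lbar m12) = 1" using dB s by (simp add: algebra_simps)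
  have s1: "s = 1" using sign_pos[OF laurentZ_Q[OF mZ(1)] laurentZ_Q[OF mZ(2)] s(1) hs] .
  have Beq: "B0 = vector [vector [m11, m12], vector [- Phi * lbar m12, lbar m11]]"
    using s s1 by (simp add: vec_eq_iff forall_2 m11_def m12_def m21_def m22_def)
  show ?thesis
    using mZ(1,2) hs s1 XB Beq by (intro exI[of _ m11] exI[of _ m12]) simp
qed

lemma find_unit:
  assumes xZ: "xx \<in> laurentZ" and yZ: "yy \<in> laurentZ" and rel: "xx * lbar xx + Phi * yy * lbar yy = 1"
  shows "\<exists>s k. (s = 1 \<or> s = -1) \<and> ev om (lmono s k * xx) = 1"
proof -
  have xQ: "xx \<in> laurentQ" and yQ: "yy \<in> laurentQ" using xZ yZ by (simp_all add: laurentZ_Q)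
  obtain a b :: int where ab: "ev om xx = of_int a + of_int b * om" using ev_om_Z xZ by blast
  have bar: "ev om (lbar xx) = of_int a + of_int b * cnj om"
    using xQ by (simp add: ev_lbar om_inverse ev_cnj ab)
  have "ev om (xx * lbar xx + Phi * yy * lbar yy) = ev om xx * ev om (lbar xx)"
    using xQ yQ by (simp add: ev_add ev_mult ev_om_Phi)
  then have "ev om xx * ev om (lbar xx) = 1" using rel by simp
  then have "(of_int (a*a - a*b + b*b) :: complex) = 1" by (simp add: ab bar eis_norm)
  then have "a*a - a*b + b*b = 1" by (metis of_int_eq_1_iff)
  then have cases: "(a = 1 \<and> b = 0) \<or> (a = -1 \<and> b = 0) \<or> (a = 0 \<and> b = 1) \<or> (a = 0 \<and> b = -1) \<or> (a = 1 \<and> b = 1) \<or> (a = -1 \<and> b = -1)"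
    by (rule eis_units)
  have ev_u: "ev om (lmono s k * xx) = of_rat s * om powi k * (of_int a + of_int b * om)" for s k
    using xQ by (simp add: ev_mult ev_lmono ab)
  have oi: "inverse om * om = 1" by simp
  have o2: "om * (1 + om) = - 1"
  proof -
    have "om * (1 + om) = om + om * om" by (simp add: algebra_simps)
    then show ?thesis by (simp add: om_sq)
  qed
  have o3: "om * (-1 - om) = 1"
  proof -
    have "om * (-1 - om) = - om - om * om" by (simp add: algebra_simps)
    then show ?thesis by (simp add: om_sq)
  qed
  from cases show ?thesis
  proof (elim disjE conjE)
    assume "a = 1" "b = 0" then show ?thesis using ev_u[of 1 0] by fastforce
  next
    assume "a = -1" "b = 0" then show ?thesis using ev_u[of "-1" 0] by fastforce
  next
    assume "a = 0" "b = 1" then show ?thesis using ev_u[of 1 "-1"] oi by (fastforce simp: power_int_minus)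
  next
    assume "a = 0" "b = -1" then show ?thesis using ev_u[of "-1" "-1"] oi by (fastforce simp: power_int_minus)
  next
    assume "a = 1" "b = 1"
    then have "ev om (lmono (-1) 1 * xx) = - (om * (1 + om))" using ev_u[of "-1" 1] by simp
    then have "ev om (lmono (-1) 1 * xx) = 1" using o2 by simp
    then show ?thesis by fastforce
  next
    assume "a = -1" "b = -1"
    then have "ev om (lmono 1 1 * xx) = om * (-1 - om)" using ev_u[of 1 1] by (simp add: algebra_simps)
    then have "ev om (lmono 1 1 * xx) = 1" using o3 by simp
    then show ?thesis by fastforce
  qed
qed

lemma construct:
  assumes xZ: "xx \<in> laurentZ" and yZ: "yy \<in> laurentZ" and rel: "xx * lbar xx + Phi * yy * lbar yy = 1"
  shows "\<exists>A \<in> calB. phibar A = pclass (vector [vector [xx, yy], vector [- Phi * lbar yy, lbar xx]])"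
proof -
  have xQ [simp]: "xx \<in> laurentQ" and yQ [simp]: "yy \<in> laurentQ" using xZ yZ by (simp_all add: laurentZ_Q)
  obtain s k where s: "s = 1 \<or> s = -1" and us: "ev om (lmono s k * xx) = 1" using find_unit xZ yZ rel by blast
  define u where "u = lmono s k"
  define ub where "ub = lmono s (-k)"
  have uZ [simp]: "u \<in> laurentZ" and ubZ [simp]: "ub \<in> laurentZ" using s by (auto simp: u_def ub_def)
  have uQ [simp]: "u \<in> laurentQ" and ubQ [simp]: "ub \<in> laurentQ" by (simp_all add: laurentZ_Q)
  have uu: "u * ub = 1" using s by (auto simp: u_def ub_def lmono_mult_mono lmono_1_0)
  have lbu: "lbar u = ub" by (simp add: u_def ub_def lbar_lmono)
  have "ev om (1 - u * xx) = 0" using us by (simp add: u_def ev_diff)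
  then obtain e where eZ [simp]: "e \<in> laurentZ" and he0: "1 - u * xx = (1 + fls_X + fls_X^2) * e"
    using div_S[of "1 - u*xx"] xZ by auto
  have "ev (-1::rat) (xx + fls_X * lbar xx) = 0" by (simp add: ev_add ev_mult ev_lbar)
  then obtain q1 where q1Z [simp]: "q1 \<in> laurentZ" and hq10: "xx + fls_X * lbar xx = (1 + fls_X) * q1"
    using div_T[of "xx + fls_X * lbar xx"] xZ by auto
  have "ev (-1::rat) (lbar yy - yy) = 0" by (simp add: ev_diff ev_lbar)
  then obtain q2 where q2Z [simp]: "q2 \<in> laurentZ" and hq20: "lbar yy - yy = (1 + fls_X) * q2"
    using div_T[of "lbar yy - yy"] yZ by auto
  have eQ [simp]: "e \<in> laurentQ" and q1Q [simp]: "q1 \<in> laurentQ" and q2Q [simp]: "q2 \<in> laurentQ"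
    by (simp_all add: laurentZ_Q)
  define xb yb eb q1b q2b where "xb = lbar xx" and "yb = lbar yy" and "eb = lbar e" and "q1b = lbar q1" and "q2b = lbar q2"
  have he: "(1 + fls_X + fls_X^2) * e = 1 - u * xx" using he0 by simp
  have hq1: "(1 + fls_X) * q1 = xx + fls_X * xb" using hq10 by (simp add: xb_def)
  have hq2: "(1 + fls_X) * q2 = yb - yy" using hq20 by (simp add: yb_def)
  have heb: "(1 + fls_X_inv + fls_X_inv^2) * eb = 1 - ub * xb"
    using arg_cong[OF he, of lbar] by (simp add: lbar_mult lbar_add lbar_diff lbar_power lbu eb_def xb_def)
  have hq1b: "(1 + fls_X_inv) * q1b = xb + fls_X_inv * xx"
    using arg_cong[OF hq1, of lbar] by (simp add: lbar_mult lbar_add lbar_diff q1b_def xb_def)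
  have hq2b: "(1 + fls_X_inv) * q2b = yy - yb"
    using arg_cong[OF hq2, of lbar] by (simp add: lbar_mult lbar_add lbar_diff q2b_def yb_def)
  define A where "A = Aexp fls_X fls_X_inv u xx xb yy yb e q1 q2"
  define Ab where "Ab = Aexp fls_X_inv fls_X ub xb xx yb yy eb q1b q2b"
  have AZ: "\<forall>i j. A $ i $ j \<in> laurentZ"
    by (simp add: A_def Aexp_def forall_3 xb_def yb_def xZ yZ)
  have mb: "matbar A = Ab"
    by (simp add: A_def Ab_def Aexp_def matbar_def vec_eq_iff forall_3 lbar_mult lbar_add lbar_diff lbu
          xb_def yb_def eb_def q1b_def q2b_def)
  have relx: "xx*xb + (1+fls_X_inv+fls_X)*yy*yb = 1" using rel by (simp add: xb_def yb_def Phi_def)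
  have T1: "A ** Tm fls_X = Tm fls_X ** Dm (u*xx) (u*yy) (-u*(1+fls_X_inv+fls_X)*yb) (u*xb)"
    unfolding A_def by (rule L1[OF XXi S_nz P_nz he hq1 hq2])
  have T2: "Ab ** Tm fls_X_inv = Tm fls_X_inv ** Dm (ub*xb) (ub*yb) (-ub*(1+fls_X+fls_X_inv)*yy) (ub*xx)"
    unfolding Ab_def by (rule L1[OF XiX Si_nz Pi_nz heb hq1b hq2b])
  have T3: "Dm (ub*xb) (ub*yb) (-ub*(1+fls_X+fls_X_inv)*yy) (ub*xx) ** Gm fls_X **
      transpose (Dm (u*xx) (u*yy) (-u*(1+fls_X_inv+fls_X)*yb) (u*xb)) = Gm fls_X"
    by (rule L3[OF XXi uu S_nz relx])
  have T4: "Tm fls_X_inv ** Gm fls_X ** transpose (Tm fls_X) = Jm (fls_X::K) fls_X_inv"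
    by (rule L2[OF XXi S_nz])
  have J: "J3 = Jm fls_X fls_X_inv" by (simp add: J3_def Jm_def)
  have unit: "matbar A ** J3 ** transpose A = J3"
    unfolding mb J by (rule L4[OF T2 T1 T3 T4])
  have vr: "vrow v* A = vrow"
    unfolding vrow_def A_def by (rule L6[OF XXi S_nz P_nz he hq1 hq2])
  have on: "A *v one3 = one3"
    unfolding one3_def A_def by (rule L7)
  have dA: "det A = (u*xx) * (u*xb) - (u*yy) * (-u*(1+fls_X_inv+fls_X)*yb)"
    by (rule L5[OF T1 P_nz S_nz])
  have dA1: "det A = u * u"
  proof -
    have "det A = u * u * (xx*xb + (1+fls_X_inv+fls_X)*yy*yb)" using dA by (simp add: algebra_simps)
    then show ?thesis using relx by simp
  qed
  have c1: "(ub * ub) * det A = 1" using dA1 uu by (simp add: algebra_simps)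
  define Bi where "Bi = (\<chi> i j. (ub * ub) * adj3 A $ i $ j)"
  have BiZ: "\<forall>i j. Bi $ i $ j \<in> laurentZ"
    using AZ by (simp add: Bi_def adj3_def forall_3 xZ yZ)
  have Binv: "A ** Bi = mat 1" "Bi ** A = mat 1" using adj3_inv[OF c1] by (simp_all add: Bi_def)
  have GL: "A \<in> GLm laurentZ"
    unfolding GLm_def using AZ BiZ Binv by blast
  have AB: "A \<in> calB" unfolding calB_def using GL vr on unit by simp
  have ph: "phi A = vector [vector [u*xx, u*yy], vector [-u*(1+fls_X_inv+fls_X)*yb, u*xb]]"
  proof -
    note l8 = L8[OF XXi S_nz P_nz he hq1 hq2, folded A_def]
    show ?thesis unfolding phi_def Let_def using l8 by simp
  qed
  have u0: "u \<noteq> 0" using uu by auto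
  have "phi A = (\<chi> i j. u * (vector [vector [xx, yy], vector [- Phi * lbar yy, lbar xx]] :: K^2^2) $ i $ j)"
    unfolding ph by (simp add: vec_eq_iff forall_2 Phi_def xb_def yb_def algebra_simps)
  then have "phibar A = pclass (vector [vector [xx, yy], vector [- Phi * lbar yy, lbar xx]])"
    by (simp add: phibar_def pclass_scale u0)
  then show ?thesis using AB by blast
qed

theorem lemma4p4:
  shows "U1 \<subseteq> phibar ` calB \<inter> PGL2 laurentZ"
proof
  fix X assume X: "X \<in> U1"
  obtain xx yy where h: "xx \<in> laurentZ" "yy \<in> laurentZ" "xx * lbar xx + Phi * yy * lbar yy = 1"
    "X = pclass (vector [vector [xx, yy], vector [- Phi * lbar yy, lbar xx]])"
    using extract_U1[OF X] by blast
  obtain A where "A \<in> calB" "phibar A = X" using construct[OF h(1-3)] h(4) by auto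
  then have "X \<in> phibar ` calB" by blast
  moreover have "X \<in> PGL2 laurentZ" using X unfolding U1_def UZ_def by auto
  ultimately show "X \<in> phibar ` calB \<inter> PGL2 laurentZ" by blast
qed

end
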